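(* An oriented graph $G$ is an in-forest if and only if it is a $1$-Burling oriented graph.
   Context: Oriented graphs are finite, without loops, multiple arcs or pairs of opposite arcs. An in-tree is an oriented graph obtained from a rooted tree by orienting every edge towards the root (edge $uv$ is oriented from $u$ to $v$ iff $v$ lies on the tree path from $u$ to the root). An in-forest is an oriented forest whose connected components are in-trees (the empty graph is an in-forest). In a rooted tree $T$ with root $r$, each non-root vertex $v$ has a parent $p(v)$; children, leaves, ancestors and descendants are as usual. A branch is a sequence $v_1\dots v_k$ ($k\ge0$) with $v_i$ the parent of $v_{i+1}$; it starts at $v_1$. A Burling tree is a 4-tuple $(T,r,\ell,c)$: $T$ a rooted tree with root $r$; $\ell$ assigns to each non-leaf vertex $v$ one of its children $\ell(v)$ (the last-born of $v$); $c$ assigns to every vertex $v$ that is neither the root nor a last-born the vertex-set of a (possibly empty) branch starting at $\ell(p(v))$, and $c(v)=\emptyset$ if $v$ is the root or a last-born. The oriented graph fully derived from it has vertex-set $V(T)$ and an arc $uv$ iff $v\in c(u)$; an oriented graph is derived from the Burling tree if it is an induced subgraph of the fully derived one. An oriented graph $G$ is a $k$-Burling oriented graph if it can be derived from a Burling tree $T$ such that every branch of $T$ contains at most $k$ vertices of $G$. *)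

theory Defs
  imports Main
begin

definition oriented_graph :: "'a set \<Rightarrow> ('a \<times> 'a) set \<Rightarrow> bool" where
  "oriented_graph V A \<longleftrightarrow> finite V \<and> A \<subseteq> V \<times> V \<and> (\<forall>x. (x, x) \<notin> A)
     \<and> (\<forall>x y. (x, y) \<in> A \<longrightarrow> (y, x) \<notin> A)"

text \<open>Rooted tree on vertex set VT with root r and parent function par
(par r is irrelevant): every non-root vertex has its parent in VT, and every
vertex reaches the root by iterating the parent map.\<close>
definition rooted_tree :: "'b set \<Rightarrow> 'b \<Rightarrow> ('b \<Rightarrow> 'b) \<Rightarrow> bool" where
  "rooted_tree VT r par \<longleftrightarrow> finite VT \<and> r \<in> VT \<and> (\<forall>v \<in> VT - {r}. par v \<in> VT)
     \<and> (\<forall>v \<in> VT. \<exists>n. (par ^^ n) v = r)"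

definition in_tree :: "'a set \<Rightarrow> ('a \<times> 'a) set \<Rightarrow> bool" where
  "in_tree V A \<longleftrightarrow> (\<exists>r par. rooted_tree V r par \<and> A = {(v, par v) | v. v \<in> V - {r}})"

definition component :: "'a set \<Rightarrow> ('a \<times> 'a) set \<Rightarrow> 'a \<Rightarrow> 'a set" where
  "component V A x = {y \<in> V. (x, y) \<in> (A \<union> A\<inverse>)\<^sup>*}"

definition in_forest :: "'a set \<Rightarrow> ('a \<times> 'a) set \<Rightarrow> bool" where
  "in_forest V A \<longleftrightarrow> oriented_graph V A \<and>
     (\<forall>x \<in> V. in_tree (component V A x) (A \<inter> (component V A x \<times> component V A x)))"

definition children :: "'b set \<Rightarrow> 'b \<Rightarrow> ('b \<Rightarrow> 'b) \<Rightarrow> 'b \<Rightarrow> 'b set" where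
  "children VT r par v = {u \<in> VT - {r}. par u = v}"

definition is_branch :: "'b set \<Rightarrow> 'b \<Rightarrow> ('b \<Rightarrow> 'b) \<Rightarrow> 'b list \<Rightarrow> bool" where
  "is_branch VT r par xs \<longleftrightarrow> set xs \<subseteq> VT \<and>
     (\<forall>i. Suc i < length xs \<longrightarrow> xs ! Suc i \<noteq> r \<and> par (xs ! Suc i) = xs ! i)"

definition burling_tree ::
  "'b set \<Rightarrow> 'b \<Rightarrow> ('b \<Rightarrow> 'b) \<Rightarrow> ('b \<Rightarrow> 'b) \<Rightarrow> ('b \<Rightarrow> 'b set) \<Rightarrow> bool" where
  "burling_tree VT r par l c \<longleftrightarrow> rooted_tree VT r par
     \<and> (\<forall>v \<in> VT. children VT r par v \<noteq> {} \<longrightarrow> l v \<in> children VT r par v)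
     \<and> (\<forall>v \<in> VT. (v = r \<or> v = l (par v)) \<longrightarrow> c v = {})
     \<and> (\<forall>v \<in> VT - {r}. v \<noteq> l (par v) \<longrightarrow>
          (\<exists>xs. is_branch VT r par xs \<and> (xs \<noteq> [] \<longrightarrow> hd xs = l (par v)) \<and> c v = set xs))"

definition fully_derived_arcs :: "'b set \<Rightarrow> ('b \<Rightarrow> 'b set) \<Rightarrow> ('b \<times> 'b) set" where
  "fully_derived_arcs VT c = {(u, v). u \<in> VT \<and> v \<in> c u}"

text \<open>k-Burling oriented graph: G is (isomorphic, via the injection phi, to) an induced
subgraph of the graph fully derived from a Burling tree, whose vertices we take to be
natural numbers (every finite tree can be relabelled so), and every branch of the tree
contains at most k vertices of G.\<close>
definition k_burling :: "'a set \<Rightarrow> ('a \<times> 'a) set \<Rightarrow> nat \<Rightarrow> bool" where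
  "k_burling V A k \<longleftrightarrow> oriented_graph V A \<and>
     (\<exists>(VT :: nat set) r par l c (phi :: 'a \<Rightarrow> nat).
        burling_tree VT r par l c \<and> inj_on phi V \<and> phi ` V \<subseteq> VT \<and>
        (\<forall>x \<in> V. \<forall>y \<in> V. (x, y) \<in> A \<longleftrightarrow> (phi x, phi y) \<in> fully_derived_arcs VT c) \<and>
        (\<forall>xs. is_branch VT r par xs \<longrightarrow> card (set xs \<inter> phi ` V) \<le> k))"

end

theory Submission
  imports Defs
begin

definition fnl :: "('a \<times> 'a) set \<Rightarrow> bool" where
  "fnl A \<longleftrightarrow> (\<forall>x y z. (x,y) \<in> A \<longrightarrow> (x,z) \<in> A \<longrightarrow> y = z)"

lemma comp_self: "x \<in> V \<Longrightarrow> x \<in> component V A x"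
  unfolding component_def by auto

lemma comp_fwd: "A \<subseteq> V \<times> V \<Longrightarrow> y \<in> component V A x \<Longrightarrow> (y,z) \<in> A \<Longrightarrow> z \<in> component V A x"
  unfolding component_def
  by (auto intro: rtrancl_into_rtrancl)

lemma comp_bwd: "A \<subseteq> V \<times> V \<Longrightarrow> y \<in> component V A x \<Longrightarrow> (z,y) \<in> A \<Longrightarrow> z \<in> component V A x"
  unfolding component_def
  by (auto intro: rtrancl_into_rtrancl)

definition dep :: "'b \<Rightarrow> ('b \<Rightarrow> 'b) \<Rightarrow> 'b \<Rightarrow> nat" where
  "dep r par w = (LEAST n. (par ^^ n) w = r)"

lemma dep_r: "dep r par r = 0"
  unfolding dep_def by (rule Least_eq_0) simp

lemma dep_par:
  assumes "\<exists>n. (par ^^ n) w = r" "w \<noteq> r"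
  shows "dep r par w = Suc (dep r par (par w))"
proof -
  let ?d = "dep r par w"
  have d: "(par ^^ ?d) w = r" unfolding dep_def using assms(1) by (rule LeastI_ex)
  then have "?d \<noteq> 0" using assms(2) by (metis funpow_0)
  then obtain e where e: "?d = Suc e" by (cases ?d) auto
  have pe: "(par ^^ e) (par w) = r" using d e by (simp add: funpow_Suc_right del: funpow.simps)
  then have le1: "dep r par (par w) \<le> e" unfolding dep_def by (rule Least_le)
  have "(par ^^ dep r par (par w)) (par w) = r" unfolding dep_def using pe by (rule LeastI)
  then have "(par ^^ Suc (dep r par (par w))) w = r" by (simp add: funpow_Suc_right del: funpow.simps)
  then have "?d \<le> Suc (dep r par (par w))" unfolding dep_def by (rule Least_le)
  with le1 e show ?thesis by simp
qed

lemma rt_reach: "rooted_tree VT r par \<Longrightarrow> w \<in> VT \<Longrightarrow> \<exists>n. (par ^^ n) w = r"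
  unfolding rooted_tree_def by blast

lemma forest_P:
  assumes og: "oriented_graph V A" and F: "in_forest V A"
  shows "fnl A \<and> acyclic A"
proof -
  have AV: "A \<subseteq> V \<times> V" using og unfolding oriented_graph_def by blast
  have T: "in_tree (component V A x) (A \<inter> (component V A x \<times> component V A x))" if "x \<in> V" for x
    using F that unfolding in_forest_def by blast
  have fn: "fnl A" unfolding fnl_def
  proof (intro allI impI)
    fix x y z assume xy: "(x,y) \<in> A" and xz: "(x,z) \<in> A"
    then have xV: "x \<in> V" using AV by blast
    let ?C = "component V A x"
    obtain r par where rt: "rooted_tree ?C r par" and E: "A \<inter> (?C \<times> ?C) = {(v, par v) | v. v \<in> ?C - {r}}"
      using T[OF xV] unfolding in_tree_def by blast
    have "x \<in> ?C" using xV by (rule comp_self)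
    moreover have "y \<in> ?C" "z \<in> ?C" using comp_fwd[OF AV \<open>x \<in> ?C\<close>] xy xz by auto
    ultimately have "(x,y) \<in> {(v, par v) | v. v \<in> ?C - {r}}" "(x,z) \<in> {(v, par v) | v. v \<in> ?C - {r}}"
      using E xy xz by blast+
    then show "y = z" by blast
  qed
  have ac: "acyclic A" unfolding acyclic_def
  proof
    fix x show "(x,x) \<notin> A\<^sup>+"
    proof
      assume xx: "(x,x) \<in> A\<^sup>+"
      then have xV: "x \<in> V" using AV using trancl_subset_Sigma[OF AV] by blast
      let ?C = "component V A x"
      obtain r par where rt: "rooted_tree ?C r par" and E: "A \<inter> (?C \<times> ?C) = {(v, par v) | v. v \<in> ?C - {r}}"
        using T[OF xV] unfolding in_tree_def by blast
      have xC: "x \<in> ?C" using xV by (rule comp_self)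
      have stp: "z \<in> ?C \<and> dep r par z < dep r par y" if "y \<in> ?C" "(y,z) \<in> A" for y z
      proof -
        have zC: "z \<in> ?C" using comp_fwd[OF AV that(1) that(2)] .
        then have "(y,z) \<in> {(v, par v) | v. v \<in> ?C - {r}}" using E that by blast
        then have "z = par y" "y \<in> ?C" "y \<noteq> r" by auto
        then have "dep r par y = Suc (dep r par z)" using dep_par rt_reach[OF rt] by metis
        with zC show ?thesis by simp
      qed
      have "\<And>y. (x,y) \<in> A\<^sup>+ \<Longrightarrow> y \<in> ?C \<and> dep r par y < dep r par x"
      proof -
        fix y assume "(x,y) \<in> A\<^sup>+"
        then show "y \<in> ?C \<and> dep r par y < dep r par x"
        proof (induction rule: trancl_induct)
          case (base y) then show ?case using stp[OF xC] by blast
        next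
          case (step y z) then show ?case using stp[of y z] by fastforce
        qed
      qed
      from this[OF xx] show False by simp
    qed
  qed
  from fn ac show ?thesis by blast
qed

lemma sink_ex:
  assumes "wf (A\<inverse>)" shows "\<exists>s. (v,s) \<in> A\<^sup>* \<and> (\<forall>t. (s,t) \<notin> A)"
  using assms
proof (induction v rule: wf_induct_rule)
  case (less v)
  show ?case
  proof (cases "\<exists>t. (v,t) \<in> A")
    case True
    then obtain t where t: "(v,t) \<in> A" by blast
    then obtain s where "(t,s) \<in> A\<^sup>*" "\<forall>u. (s,u) \<notin> A" using less by blast
    then show ?thesis using t by (meson converse_rtrancl_into_rtrancl)
  next
    case False then show ?thesis by blast
  qed
qed

lemma conn_reach:
  assumes fn: "fnl A" and ab: "(a,b) \<in> (A \<union> A\<inverse>)\<^sup>*" and as: "(a,s) \<in> A\<^sup>*" and sk: "\<forall>t. (s,t) \<notin> A"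
  shows "(b,s) \<in> A\<^sup>*"
  using ab
proof (induction rule: rtrancl_induct)
  case base then show ?case using as .
next
  case (step b c)
  from step.hyps(2) show ?case
  proof
    assume bc: "(b,c) \<in> A"
    from step.IH show ?thesis
    proof (cases rule: converse_rtranclE)
      case base then show ?thesis using bc sk by blast
    next
      case (step c')
      then have "c' = c" using fn bc unfolding fnl_def by blast
      then show ?thesis using step by simp
    qed
  next
    assume "(b,c) \<in> A\<inverse>"
    then show ?thesis using step.IH by (meson converseD converse_rtrancl_into_rtrancl)
  qed
qed

lemma P_forest:
  assumes og: "oriented_graph V A" and fn: "fnl A" and ac: "acyclic A"
  shows "in_forest V A"
proof -
  have AV: "A \<subseteq> V \<times> V" and fV: "finite V" using og unfolding oriented_graph_def by blast+
  have fA: "finite A" using AV fV by (meson finite_SigmaI finite_subset)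
  have wf: "wf (A\<inverse>)" using fA ac by (rule finite_acyclic_wf_converse)
  define par where "par v = (SOME y. (v,y) \<in> A)" for v
  have parA: "(v, par v) \<in> A" if "(v,y) \<in> A" for v y
    unfolding par_def using that by (rule someI)
  have parE: "par v = y" if "(v,y) \<in> A" for v y
    using parA[OF that] that fn unfolding fnl_def by blast
  have "in_tree (component V A x) (A \<inter> (component V A x \<times> component V A x))" if xV: "x \<in> V" for x
  proof -
    let ?C = "component V A x"
    obtain r where xr: "(x,r) \<in> A\<^sup>*" and sk: "\<forall>t. (r,t) \<notin> A" using sink_ex[OF wf] by blast
    have reach: "(v,r) \<in> A\<^sup>*" if "v \<in> ?C" for v
      using that conn_reach[OF fn _ xr sk] unfolding component_def by blast
    have rV: "r \<in> V" using xr xV AV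
      by (metis (no_types, lifting) SigmaD2 rtranclE subsetD)
    have rC: "r \<in> ?C" unfolding component_def using rV xr
      by (auto intro: rtrancl_mono[THEN subsetD, of A])
    have nr: "(v, par v) \<in> A" if "v \<in> ?C" "v \<noteq> r" for v
      using reach[OF that(1)] that(2) by (metis converse_rtranclE parA)
    have rt: "rooted_tree ?C r par" unfolding rooted_tree_def
    proof (intro conjI ballI)
      show "finite ?C" using fV unfolding component_def by simp
      show "r \<in> ?C" by (rule rC)
      fix v assume "v \<in> ?C - {r}"
      then show "par v \<in> ?C" using nr comp_fwd[OF AV] by blast
    next
      fix v assume "v \<in> ?C"
      have "(v,r) \<in> A\<^sup>*" using reach[OF \<open>v \<in> ?C\<close>] .
      then show "\<exists>n. (par ^^ n) v = r"
      proof (induction rule: converse_rtrancl_induct)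
        case base then show ?case by (metis funpow_0)
      next
        case (step y z)
        then obtain n where "(par ^^ n) z = r" by blast
        then have "(par ^^ Suc n) y = r" using parE[OF step.hyps(1)]
          by (simp add: funpow_Suc_right del: funpow.simps)
        then show ?case by blast
      qed
    qed
    have "A \<inter> (?C \<times> ?C) = {(v, par v) | v. v \<in> ?C - {r}}"
    proof
      show "A \<inter> (?C \<times> ?C) \<subseteq> {(v, par v) | v. v \<in> ?C - {r}}"
      proof
        fix p assume "p \<in> A \<inter> (?C \<times> ?C)"
        then obtain v y where p: "p = (v,y)" "(v,y) \<in> A" "v \<in> ?C" by blast
        then have "v \<noteq> r" using sk by blast
        then show "p \<in> {(v, par v) | v. v \<in> ?C - {r}}" using p parE by blast
      qed
      show "{(v, par v) | v. v \<in> ?C - {r}} \<subseteq> A \<inter> (?C \<times> ?C)"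
        using nr comp_fwd[OF AV] by blast
    qed
    with rt show ?thesis unfolding in_tree_def by blast
  qed
  then show ?thesis using og unfolding in_forest_def by blast
qed


definition desc :: "'b \<Rightarrow> ('b \<Rightarrow> 'b) \<Rightarrow> 'b \<Rightarrow> 'b \<Rightarrow> bool" where
  "desc r par w a \<longleftrightarrow> (\<exists>k. (par ^^ k) w = a \<and> dep r par w = dep r par a + k)"

lemma desc_refl: "desc r par w w" unfolding desc_def by (rule exI[of _ 0]) simp

lemma desc_trans: "desc r par a b \<Longrightarrow> desc r par b c \<Longrightarrow> desc r par a c"
proof -
  assume "desc r par a b" "desc r par b c"
  then obtain k1 k2 where "(par ^^ k1) a = b" "dep r par a = dep r par b + k1"
    "(par ^^ k2) b = c" "dep r par b = dep r par c + k2" unfolding desc_def by blast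
  then have "(par ^^ (k2 + k1)) a = c" "dep r par a = dep r par c + (k2 + k1)"
    by (simp_all add: funpow_add)
  then show ?thesis unfolding desc_def by blast
qed

lemma desc_child: "rooted_tree VT r par \<Longrightarrow> w \<in> VT \<Longrightarrow> w \<noteq> r \<Longrightarrow> desc r par w (par w)"
  unfolding desc_def using dep_par[OF rt_reach] by (intro exI[of _ 1]) auto

lemma desc_up:
  assumes rt: "rooted_tree VT r par" and w: "w \<in> VT" and d: "desc r par w a" and ne: "w \<noteq> a"
  shows "desc r par (par w) a \<and> w \<noteq> r"
proof -
  obtain k where k: "(par ^^ k) w = a" "dep r par w = dep r par a + k" using d unfolding desc_def by blast
  then obtain k' where kk: "k = Suc k'" using ne by (cases k) auto
  have wr: "w \<noteq> r" using k kk dep_r by (metis add_Suc_right nat.distinct(1))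
  have "dep r par w = Suc (dep r par (par w))" using dep_par[OF rt_reach[OF rt w] wr] .
  moreover have "(par ^^ k') (par w) = a" using k(1) kk by (simp add: funpow_Suc_right del: funpow.simps)
  ultimately show ?thesis using k kk wr unfolding desc_def by auto
qed

lemma branch_desc:
  assumes rt: "rooted_tree VT r par" and br: "is_branch VT r par xs"
  shows "i < length xs \<Longrightarrow> desc r par (xs ! i) (xs ! 0)"
proof (induction i)
  case 0 show ?case by (rule desc_refl)
next
  case (Suc i)
  have "xs ! Suc i \<in> VT" using br Suc.prems unfolding is_branch_def by (meson nth_mem subsetD)
  moreover have "xs ! Suc i \<noteq> r" "par (xs ! Suc i) = xs ! i" using br Suc.prems unfolding is_branch_def by auto
  ultimately have "desc r par (xs ! Suc i) (xs ! i)" using desc_child[OF rt] by metis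
  then show ?case using Suc desc_trans by (metis Suc_lessD)
qed

lemma bt_rt: "burling_tree VT r par l c \<Longrightarrow> rooted_tree VT r par"
  unfolding burling_tree_def by (elim conjE)

lemma bt_l: "burling_tree VT r par l c \<Longrightarrow> v \<in> VT \<Longrightarrow> children VT r par v \<noteq> {} \<Longrightarrow> l v \<in> children VT r par v"
  unfolding burling_tree_def by (elim conjE) (drule bspec, assumption, erule mp, assumption)

lemma bt_c0: "burling_tree VT r par l c \<Longrightarrow> v \<in> VT \<Longrightarrow> v = r \<or> v = l (par v) \<Longrightarrow> c v = {}"
  unfolding burling_tree_def by (elim conjE) (drule bspec[of _ _ v], assumption, erule mp, assumption)

lemma bt_c: "burling_tree VT r par l c \<Longrightarrow> v \<in> VT \<Longrightarrow> v \<noteq> r \<Longrightarrow> v \<noteq> l (par v) \<Longrightarrow>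
   \<exists>xs. is_branch VT r par xs \<and> (xs \<noteq> [] \<longrightarrow> hd xs = l (par v)) \<and> c v = set xs"
  unfolding burling_tree_def by (elim conjE) (drule bspec[of _ _ v], simp, erule mp, assumption)

lemma bt_facts:
  assumes bt: "burling_tree VT r par l c" and u: "u \<in> VT" and cu: "c u \<noteq> {}"
  shows "u \<noteq> r \<and> l (par u) \<in> VT \<and> l (par u) \<noteq> r \<and> par (l (par u)) = par u \<and> c (l (par u)) = {}
     \<and> c u \<subseteq> VT \<and> (\<forall>v \<in> c u. desc r par v (l (par u)))"
proof -
  have rt: "rooted_tree VT r par" using bt by (rule bt_rt)
  have ur: "u \<noteq> r" using bt_c0[OF bt u] cu by blast
  have ul: "u \<noteq> l (par u)" using bt_c0[OF bt u] cu by blast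
  have pu: "par u \<in> VT" using rt u ur unfolding rooted_tree_def by blast
  have "u \<in> children VT r par (par u)" using u ur unfolding children_def by blast
  then have L: "l (par u) \<in> children VT r par (par u)" using bt_l[OF bt pu] by blast
  then have L1: "l (par u) \<in> VT" "l (par u) \<noteq> r" "par (l (par u)) = par u" unfolding children_def by auto
  then have L2: "c (l (par u)) = {}" using bt_c0[OF bt L1(1)] by simp
  obtain xs where xs: "is_branch VT r par xs" "xs \<noteq> [] \<longrightarrow> hd xs = l (par u)" "c u = set xs"
    using bt_c[OF bt u ur ul] by blast
  have "c u \<subseteq> VT" using xs unfolding is_branch_def by blast
  moreover have "\<forall>v \<in> c u. desc r par v (l (par u))"
  proof
    fix v assume "v \<in> c u"
    then obtain i where i: "i < length xs" "v = xs ! i" using xs(3) by (metis in_set_conv_nth)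
    then have "xs \<noteq> []" by auto
    then have "xs ! 0 = l (par u)" using xs(2) by (simp add: hd_conv_nth)
    then show "desc r par v (l (par u))" using branch_desc[OF rt xs(1) i(1)] i by simp
  qed
  ultimately show ?thesis using ur L1 L2 by blast
qed

lemma burling_acyclic:
  assumes bt: "burling_tree VT r par l c"
  shows "acyclic (fully_derived_arcs VT c)"
proof -
  let ?F = "fully_derived_arcs VT c"
  have rt: "rooted_tree VT r par" using bt by (rule bt_rt)
  have clos: "b \<in> VT \<and> desc r par b L" if "(a,b) \<in> ?F\<^sup>+" "a \<in> VT" "desc r par a L" "c L = {}" for a b L
    using that(1-3)
  proof (induction rule: trancl_induct)
    case (base y)
    then have ca: "c a \<noteq> {}" "y \<in> c a" unfolding fully_derived_arcs_def by auto
    then have "a \<noteq> L" using that(4) by auto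
    then have d1: "desc r par (par a) L" using desc_up[OF rt base(2,3)] by blast
    note f = bt_facts[OF bt base(2) ca(1)]
    have d2: "desc r par (l (par a)) (par a)" using f desc_child[OF rt, of "l (par a)"] by metis
    have d3: "desc r par y (l (par a))" using f ca(2) by blast
    have "y \<in> VT" using f ca(2) by blast
    then show ?case using desc_trans[OF desc_trans[OF d3 d2] d1] by blast
  next
    case (step y z)
    then have yV: "y \<in> VT" and dy: "desc r par y L" by auto
    then have ca: "c y \<noteq> {}" "z \<in> c y" using step(2) unfolding fully_derived_arcs_def by auto
    then have "y \<noteq> L" using that(4) by auto
    then have d1: "desc r par (par y) L" using desc_up[OF rt yV dy] by blast
    note f = bt_facts[OF bt yV ca(1)]
    have d2: "desc r par (l (par y)) (par y)" using f desc_child[OF rt, of "l (par y)"] by metis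
    have d3: "desc r par z (l (par y))" using f ca(2) by blast
    have "z \<in> VT" using f ca(2) by blast
    then show ?case using desc_trans[OF desc_trans[OF d3 d2] d1] by blast
  qed
  show ?thesis unfolding acyclic_def
  proof (intro allI notI)
    fix u assume uu: "(u,u) \<in> ?F\<^sup>+"
    then obtain v where uv: "(u,v) \<in> ?F" and vu: "(v,u) \<in> ?F\<^sup>*" using tranclD by metis
    then have uV: "u \<in> VT" and cu: "c u \<noteq> {}" "v \<in> c u" unfolding fully_derived_arcs_def by auto
    note f = bt_facts[OF bt uV cu(1)]
    let ?L = "l (par u)"
    have vV: "v \<in> VT" and dv: "desc r par v ?L" using f cu by auto
    have du: "desc r par u ?L"
    proof (cases "v = u")
      case True then show ?thesis using dv by simp
    next
      case False then have "(v,u) \<in> ?F\<^sup>+" using vu by (meson rtranclD)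
      then show ?thesis using clos[OF _ vV dv] f by blast
    qed
    have "dep r par u = Suc (dep r par (par u))" using dep_par[OF rt_reach[OF rt uV]] f by blast
    moreover have "dep r par ?L = Suc (dep r par (par u))" using dep_par[OF rt_reach[OF rt], of ?L] f by metis
    moreover obtain k where "(par ^^ k) u = ?L" "dep r par u = dep r par ?L + k" using du unfolding desc_def by blast
    ultimately have "u = ?L" by simp
    moreover have "u \<noteq> ?L" using bt_c0[OF bt uV] cu by blast
    ultimately show False by blast
  qed
qed

lemma burling_P:
  assumes K: "k_burling V A 1"
  shows "fnl A \<and> acyclic A"
proof -
  have og: "oriented_graph V A" using K unfolding k_burling_def by blast
  have AV: "A \<subseteq> V \<times> V" using og unfolding oriented_graph_def by blast
  obtain VT :: "nat set" and r par l c and phi :: "'a \<Rightarrow> nat" where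
    bt: "burling_tree VT r par l c" and inj: "inj_on phi V" and sub: "phi ` V \<subseteq> VT" and
    arc: "\<forall>x \<in> V. \<forall>y \<in> V. (x, y) \<in> A \<longleftrightarrow> (phi x, phi y) \<in> fully_derived_arcs VT c" and
    brs: "\<forall>xs. is_branch VT r par xs \<longrightarrow> card (set xs \<inter> phi ` V) \<le> 1"
    using K unfolding k_burling_def by (elim conjE exE) (rule that, assumption+)
  have fn: "fnl A" unfolding fnl_def
  proof (intro allI impI)
    fix x y z assume xy: "(x,y) \<in> A" and xz: "(x,z) \<in> A"
    then have V: "x \<in> V" "y \<in> V" "z \<in> V" using AV by auto
    then have cy: "phi y \<in> c (phi x)" "phi z \<in> c (phi x)" "phi x \<in> VT"
      using arc xy xz unfolding fully_derived_arcs_def by auto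
    then have "phi x \<noteq> r" "phi x \<noteq> l (par (phi x))" using bt_c0[OF bt cy(3)] by blast+
    then obtain xs where xs: "is_branch VT r par xs" "c (phi x) = set xs"
      using bt_c[OF bt cy(3)] by blast
    have "phi y \<in> set xs \<inter> phi ` V" "phi z \<in> set xs \<inter> phi ` V" using cy xs V by auto
    moreover have "card (set xs \<inter> phi ` V) \<le> 1" using brs xs by blast
    moreover have "finite (set xs \<inter> phi ` V)" by simp
    ultimately have "phi y = phi z"
      using card_le_Suc0_iff_eq by (metis One_nat_def)
    then show "y = z" using inj V unfolding inj_on_def by blast
  qed
  have "(phi x, phi y) \<in> (fully_derived_arcs VT c)\<^sup>+" if "(x,y) \<in> A\<^sup>+" for x y
    using that
  proof (induction rule: trancl_induct)
    case (base y)
    then have "x \<in> V" "y \<in> V" using AV by auto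
    then show ?case using arc base by blast
  next
    case (step y z)
    then have "y \<in> V" "z \<in> V" using AV by auto
    then have "(phi y, phi z) \<in> fully_derived_arcs VT c" using arc step by blast
    then show ?case using step by (meson trancl_into_trancl)
  qed
  then have "acyclic A" using burling_acyclic[OF bt] unfolding acyclic_def by blast
  with fn show ?thesis by blast
qed


lemma P_burling:
  assumes og: "oriented_graph V A" and fn: "fnl A" and ac: "acyclic A"
  shows "k_burling V A 1"
proof -
  have AV: "A \<subseteq> V \<times> V" and fV: "finite V" using og unfolding oriented_graph_def by blast+
  define \<rho> where "\<rho> x = card {z. (x,z) \<in> A\<^sup>+}" for x
  have rho_le: "\<rho> x \<le> card V" for x
  proof -
    have "{z. (x,z) \<in> A\<^sup>+} \<subseteq> V" using trancl_subset_Sigma[OF AV] by blast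
    then show ?thesis unfolding \<rho>_def using fV by (rule card_mono[rotated])
  qed
  have rho_lt: "\<rho> y < \<rho> x" if xy: "(x,y) \<in> A" for x y
  proof -
    have s: "{z. (x,z) \<in> A\<^sup>+} \<subseteq> V" using trancl_subset_Sigma[OF AV] by blast
    have "{z. (y,z) \<in> A\<^sup>+} \<subseteq> {z. (x,z) \<in> A\<^sup>+}" using xy by (auto intro: trancl_into_trancl2)
    moreover have "y \<in> {z. (x,z) \<in> A\<^sup>+}" using xy by auto
    moreover have "y \<notin> {z. (y,z) \<in> A\<^sup>+}" using ac unfolding acyclic_def by auto
    ultimately have "{z. (y,z) \<in> A\<^sup>+} \<subset> {z. (x,z) \<in> A\<^sup>+}" by blast
    then show ?thesis unfolding \<rho>_def using finite_subset[OF s fV] by (rule psubset_card_mono[rotated])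
  qed
  obtain f :: "'a \<Rightarrow> nat" where inj_f: "inj_on f V" using finite_imp_inj_to_nat_seg[OF fV] by blast
  define R where "R = Suc (card V)"
  define phi where "phi x = 2 * f x + 1" for x
  have inj: "inj_on phi V" using inj_f unfolding inj_on_def phi_def by auto
  have odd_phi: "odd (phi x)" for x unfolding phi_def by simp
  define VT where "VT = (\<lambda>k. 2 * k) ` {..R} \<union> phi ` V"
  define root where "root = 2 * R"
  define ix where "ix n = inv_into V phi n" for n
  have ix: "ix (phi x) = x" if "x \<in> V" for x unfolding ix_def using inj that by (rule inv_into_f_f)
  define par where "par n = (if even n then n + 2 else 2 * (\<rho> (ix n) + 1))" for n :: nat
  have par_even: "even (par n)" "par n \<ge> 2" for n unfolding par_def by auto
  have par_phi: "par (phi x) = 2 * (\<rho> x + 1)" if "x \<in> V" for x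
    unfolding par_def using odd_phi ix[OF that] by simp
  have par_ev: "par (2 * k) = 2 * Suc k" for k unfolding par_def by simp
  define l where "l n = n - (2::nat)" for n
  define succ where "succ x = (SOME y. (x,y) \<in> A)" for x
  have succ: "succ x = y" if "(x,y) \<in> A" for x y
  proof -
    have "(x, succ x) \<in> A" unfolding succ_def using that by (rule someI)
    then show ?thesis using fn that unfolding fnl_def by blast
  qed
  define brl where "brl x y = map (\<lambda>i. 2 * (\<rho> x - i)) [0..<\<rho> x - \<rho> y] @ [phi y]" for x y
  define cc where "cc x = (if \<exists>y. (x,y) \<in> A then set (brl x (succ x)) else {})" for x
  define c where "c n = (if n \<in> phi ` V then cc (ix n) else {})" for n
  have c_phi: "c (phi x) = cc x" if "x \<in> V" for x unfolding c_def using ix[OF that] that by auto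
  have c_ne: "n \<in> phi ` V" if "c n \<noteq> {}" for n using that unfolding c_def by auto
  have VT_cases: "(\<exists>k \<le> R. n = 2 * k) \<or> (\<exists>x \<in> V. n = phi x)" if "n \<in> VT" for n
    using that unfolding VT_def by auto
  have VT_even: "2 * k \<in> VT" if "k \<le> R" for k unfolding VT_def using that by auto
  have VT_even2: "n \<in> VT" if "even n" "n \<le> 2 * R" for n
    using that VT_even by (metis dvdE mult_le_cancel1 zero_less_numeral)
  have VT_phi: "phi x \<in> VT" if "x \<in> V" for x unfolding VT_def using that by auto
  have iter: "(par ^^ j) (2 * k) = 2 * (k + j)" for j k
  proof (induction j)
    case (Suc j)
    have "(par ^^ Suc j) (2 * k) = par (2 * (k + j))" using Suc by simp
    also have "\<dots> = 2 * (k + Suc j)" by (simp only: par_ev) simp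
    finally show ?case .
  qed simp
  have rt: "rooted_tree VT root par" unfolding rooted_tree_def
  proof (intro conjI ballI)
    show "finite VT" unfolding VT_def using fV by simp
    show "root \<in> VT" unfolding root_def by (rule VT_even) simp
  next
    fix v assume v: "v \<in> VT - {root}"
    then consider (e) k where "k \<le> R" "v = 2 * k" | (o) x where "x \<in> V" "v = phi x"
      using VT_cases by blast
    then show "par v \<in> VT"
    proof cases
      case e then have "k \<noteq> R" using v unfolding root_def by auto
      then have "Suc k \<le> R" using e by simp
      then show ?thesis using e(2) par_ev[of k] VT_even[of "Suc k"] by metis
    next
      case o then show ?thesis using par_phi VT_even2 rho_le[of x] unfolding R_def by simp
    qed
  next
    fix v assume v: "v \<in> VT"
    then consider (e) k where "k \<le> R" "v = 2 * k" | (o) x where "x \<in> V" "v = phi x"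
      using VT_cases by blast
    then show "\<exists>n. (par ^^ n) v = root"
    proof cases
      case e then have "(par ^^ (R - k)) v = root" using iter unfolding root_def by simp
      then show ?thesis by blast
    next
      case o
      have "(par ^^ Suc (R - (\<rho> x + 1))) v = (par ^^ (R - (\<rho> x + 1))) (2 * (\<rho> x + 1))"
        using o par_phi by (simp add: funpow_Suc_right del: funpow.simps)
      also have "\<dots> = 2 * (\<rho> x + 1 + (R - (\<rho> x + 1)))" by (rule iter)
      also have "\<dots> = root" using rho_le[of x] unfolding root_def R_def by simp
      finally show ?thesis by blast
    qed
  qed
  have brl_branch: "is_branch VT root par (brl x y) \<and> hd (brl x y) = 2 * \<rho> x"
    if xy: "(x,y) \<in> A" for x y
  proof -
    have V: "x \<in> V" "y \<in> V" using xy AV by auto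
    have lt: "\<rho> y < \<rho> x" using rho_lt[OF xy] .
    let ?m = "\<rho> x - \<rho> y"
    have len: "length (brl x y) = Suc ?m" unfolding brl_def by simp
    have nth1: "brl x y ! i = 2 * (\<rho> x - i)" if "i < ?m" for i
      using that unfolding brl_def by (simp add: nth_append)
    have nth2: "brl x y ! ?m = phi y" unfolding brl_def by (simp add: nth_append)
    have "set (brl x y) \<subseteq> VT"
      unfolding brl_def using VT_phi[OF V(2)] VT_even rho_le[of x] unfolding R_def by auto
    moreover have "brl x y ! Suc i \<noteq> root \<and> par (brl x y ! Suc i) = brl x y ! i"
      if i: "Suc i < length (brl x y)" for i
    proof (cases "Suc i < ?m")
      case True
      then show ?thesis using nth1[OF True] nth1[of i] par_ev rho_le[of x] lt
        unfolding root_def R_def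
        by simp arith
    next
      case False
      then have si: "Suc i = ?m" using i len by simp
      have "brl x y ! i = 2 * (\<rho> y + 1)" using nth1[of i] si lt by simp
      then show ?thesis using si nth2 par_phi[OF V(2)] odd_phi[of y] unfolding root_def by auto
    qed
    moreover have "hd (brl x y) = 2 * \<rho> x" unfolding brl_def using lt by (simp add: upt_conv_Cons)
    ultimately show ?thesis unfolding is_branch_def by blast
  qed
  have bt: "burling_tree VT root par l c" unfolding burling_tree_def
  proof (intro conjI ballI impI)
    show "rooted_tree VT root par" by (rule rt)
  next
    fix v assume v: "v \<in> VT" and ch: "children VT root par v \<noteq> {}"
    then obtain u where u: "u \<in> VT" "u \<noteq> root" "par u = v" unfolding children_def by blast
    then have ev: "even v" "v \<ge> 2" using par_even by auto
    then obtain m where m: "v = 2 * m" by blast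
    have "\<not> (\<exists>x \<in> V. v = phi x)" using ev odd_phi by blast
    then obtain k where "k \<le> R" "v = 2 * k" using VT_cases[OF v] by blast
    then have "m \<le> R" using m by simp
    moreover have "m \<ge> 1" using ev m by simp
    ultimately have lv: "l v = 2 * (m - 1)" "m - 1 \<le> R" unfolding l_def using m by auto
    have "l v \<in> VT" using lv VT_even by simp
    moreover have "l v \<noteq> root" using lv \<open>m \<le> R\<close> \<open>m \<ge> 1\<close> unfolding root_def by simp
    moreover have "par (l v) = v" using lv(1) par_ev[of "m - 1"] m \<open>m \<ge> 1\<close> by simp
    ultimately have "l v \<in> VT" "l v \<noteq> root" "par (l v) = v" by blast+
    then show "l v \<in> children VT root par v" unfolding children_def by blast
  next
    fix v assume v: "v \<in> VT" and h: "v = root \<or> v = l (par v)"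
    show "c v = {}"
    proof (rule ccontr)
      assume "c v \<noteq> {}"
      then have "odd v" using c_ne odd_phi by blast
      moreover have "even (l (par v))" unfolding l_def using par_even[of v] by simp
      ultimately show False using h unfolding root_def by auto
    qed
  next
    fix v assume v: "v \<in> VT - {root}" and nl: "v \<noteq> l (par v)"
    show "\<exists>xs. is_branch VT root par xs \<and> (xs \<noteq> [] \<longrightarrow> hd xs = l (par v)) \<and> c v = set xs"
    proof (cases "c v = {}")
      case True
      then show ?thesis by (intro exI[of _ "[]"]) (simp add: is_branch_def)
    next
      case False
      then obtain x where x: "x \<in> V" "v = phi x" using c_ne by blast
      then have ex: "\<exists>y. (x,y) \<in> A" using False c_phi unfolding cc_def by auto
      then obtain y where xy: "(x,y) \<in> A" by blast
      then have "c v = set (brl x y)" using c_phi x succ[OF xy] unfolding cc_def by auto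
      moreover have "l (par v) = 2 * \<rho> x" using par_phi x unfolding l_def by simp
      moreover note b = brl_branch[OF xy]
      ultimately show ?thesis by (intro exI[of _ "brl x y"]) simp
    qed
  qed
  have arcs: "(x, y) \<in> A \<longleftrightarrow> (phi x, phi y) \<in> fully_derived_arcs VT c" if V: "x \<in> V" "y \<in> V" for x y
  proof
    assume xy: "(x,y) \<in> A"
    have "phi y \<in> set (brl x y)" unfolding brl_def by simp
    then show "(phi x, phi y) \<in> fully_derived_arcs VT c"
      unfolding fully_derived_arcs_def using c_phi[OF V(1)] succ[OF xy] xy VT_phi[OF V(1)]
      unfolding cc_def by auto
  next
    assume "(phi x, phi y) \<in> fully_derived_arcs VT c"
    then have py: "phi y \<in> cc x" unfolding fully_derived_arcs_def using c_phi[OF V(1)] by auto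
    then obtain z where xz: "(x,z) \<in> A" unfolding cc_def by (auto split: if_splits)
    then have "cc x = set (brl x z)" using succ[OF xz] unfolding cc_def by auto
    then have "phi y \<in> set (brl x z)" using py by simp
    then have "phi y = phi z" unfolding brl_def using odd_phi[of y] by auto
    moreover have "z \<in> V" using xz AV by auto
    ultimately have "y = z" using inj V unfolding inj_on_def by blast
    then show "(x,y) \<in> A" using xz by simp
  qed
  have brs: "card (set xs \<inter> phi ` V) \<le> 1" if br: "is_branch VT root par xs" for xs
  proof -
    have "set xs \<inter> phi ` V \<subseteq> {xs ! (length xs - 1)}"
    proof
      fix w assume w: "w \<in> set xs \<inter> phi ` V"
      then obtain i where i: "i < length xs" "w = xs ! i" by (metis IntD1 in_set_conv_nth)
      have "\<not> Suc i < length xs"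
      proof
        assume "Suc i < length xs"
        then have "par (xs ! Suc i) = xs ! i" using br unfolding is_branch_def by blast
        then show False using par_even(1)[of "xs ! Suc i"] w i odd_phi by auto
      qed
      then have "i = length xs - 1" using i by simp
      then show "w \<in> {xs ! (length xs - 1)}" using i by simp
    qed
    then have "card (set xs \<inter> phi ` V) \<le> card {xs ! (length xs - 1)}" by (rule card_mono[rotated]) simp
    then show ?thesis by simp
  qed
  have "phi ` V \<subseteq> VT" using VT_phi by blast
  then show ?thesis unfolding k_burling_def using og bt inj arcs brs
    by (intro conjI exI[of _ VT] exI[of _ root] exI[of _ par] exI[of _ l] exI[of _ c] exI[of _ phi]) auto
qed

theorem lemma4p1:
  fixes V :: "'a set" and A :: "('a \<times> 'a) set"
  assumes "oriented_graph V A"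
  shows "in_forest V A \<longleftrightarrow> k_burling V A 1"
proof
  assume "in_forest V A"
  then have "fnl A \<and> acyclic A" using forest_P assms by blast
  then show "k_burling V A 1" using P_burling assms by blast
next
  assume "k_burling V A 1"
  then have "fnl A \<and> acyclic A" by (rule burling_P)
  then show "in_forest V A" using P_forest assms by blast
qed

end
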